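(* Let $v_j\neq v_k$ be values and $X_1,\dots,X_n$ finite domain variables. Introduce 0/1 variables $B_1,\dots,B_{n+1}$ with $B_1=0$, and for each $1\le i\le n$ the ternary constraint $C(X_i,B_i,B_{i+1})$ which holds iff ($X_i=v_j\Rightarrow B_{i+1}=1$), ($X_i\neq v_j\Rightarrow B_i=B_{i+1}$), and ($B_i=0\Rightarrow X_i\neq v_k$). Then (a) an assignment to $X_1,\dots,X_n$ satisfies $\mathrm{Precedence}([v_j,v_k],[X_1,\dots,X_n])$ iff it extends to an assignment of $B_1,\dots,B_{n+1}$ with $B_1=0$ satisfying all $C(X_i,B_i,B_{i+1})$; and (b) if the domains are such that $D(B_1)=\{0\}$ and every constraint $C(X_i,B_i,B_{i+1})$, $1\le i\le n$, is GAC (with all domains nonempty), then $\mathrm{Precedence}([v_j,v_k],[X_1,\dots,X_n])$ is GAC on the domains of $X_1,\dots,X_n$.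
   Context: A support of a constraint is an assignment of a value from its domain to each of its variables that satisfies it; a constraint is GAC iff every value in every variable's domain belongs to some support. $\mathrm{Precedence}([a,b],[X_1,\dots,X_n])$ holds iff $\min\{i \mid X_i=a \text{ or } i=n+1\} < \min\{i \mid X_i=b \text{ or } i=n+2\}$. *)

theory Defs
  imports Main
begin

text \<open>Variables X_1..X_n are indexed by 1..n; an assignment is a function nat => 'a.
  Precedence([a,b],[X_1..X_n]):
  min{i | X_i = a or i = n+1} < min{i | X_i = b or i = n+2}.\<close>
definition precedence :: "'a \<Rightarrow> 'a \<Rightarrow> nat \<Rightarrow> (nat \<Rightarrow> 'a) \<Rightarrow> bool" where
  "precedence a b n X \<longleftrightarrow>
     (LEAST i. (1 \<le> i \<and> i \<le> n \<and> X i = a) \<or> i = n + 1)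
       < (LEAST i. (1 \<le> i \<and> i \<le> n \<and> X i = b) \<or> i = n + 2)"

definition Cprec :: "'a \<Rightarrow> 'a \<Rightarrow> 'a \<Rightarrow> nat \<Rightarrow> nat \<Rightarrow> bool" where
  "Cprec vj vk x b b' \<longleftrightarrow>
     (x = vj \<longrightarrow> b' = 1) \<and> (x \<noteq> vj \<longrightarrow> b = b') \<and> (b = 0 \<longrightarrow> x \<noteq> vk)"

definition gac3 :: "('x \<Rightarrow> 'y \<Rightarrow> 'z \<Rightarrow> bool) \<Rightarrow> 'x set \<Rightarrow> 'y set \<Rightarrow> 'z set \<Rightarrow> bool" where
  "gac3 C DX D1 D2 \<longleftrightarrow>
     (\<forall>x\<in>DX. \<exists>y\<in>D1. \<exists>z\<in>D2. C x y z) \<and>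
     (\<forall>y\<in>D1. \<exists>x\<in>DX. \<exists>z\<in>D2. C x y z) \<and>
     (\<forall>z\<in>D2. \<exists>x\<in>DX. \<exists>y\<in>D1. C x y z)"

definition gacn :: "nat \<Rightarrow> (nat \<Rightarrow> 'a set) \<Rightarrow> ((nat \<Rightarrow> 'a) \<Rightarrow> bool) \<Rightarrow> bool" where
  "gacn n D P \<longleftrightarrow>
     (\<forall>i\<in>{1..n}. \<forall>d\<in>D i. \<exists>X. (\<forall>k\<in>{1..n}. X k \<in> D k) \<and> X i = d \<and> P X)"

end

theory Submission
  imports Defs
begin

lemma prec_iff:
  assumes "vj \<noteq> vk"
  shows "precedence vj vk n X \<longleftrightarrow> (\<forall>i\<in>{1..n}. X i = vk \<longrightarrow> (\<exists>j\<in>{1..<i}. X j = vj))"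
proof -
  define A where "A = (LEAST i. (1 \<le> i \<and> i \<le> n \<and> X i = vj) \<or> i = n + 1)"
  define K where "K = (LEAST i. (1 \<le> i \<and> i \<le> n \<and> X i = vk) \<or> i = n + 2)"
  have pA: "(1 \<le> A \<and> A \<le> n \<and> X A = vj) \<or> A = n + 1"
    unfolding A_def by (rule LeastI[of _ "n+1"]) simp
  have pK: "(1 \<le> K \<and> K \<le> n \<and> X K = vk) \<or> K = n + 2"
    unfolding K_def by (rule LeastI[of _ "n+2"]) simp
  have lA: "\<And>j. (1 \<le> j \<and> j \<le> n \<and> X j = vj) \<or> j = n + 1 \<Longrightarrow> A \<le> j"
    unfolding A_def by (rule Least_le)
  have lK: "\<And>j. (1 \<le> j \<and> j \<le> n \<and> X j = vk) \<or> j = n + 2 \<Longrightarrow> K \<le> j"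
    unfolding K_def by (rule Least_le)
  have "A < K \<longleftrightarrow> (\<forall>i\<in>{1..n}. X i = vk \<longrightarrow> (\<exists>j\<in>{1..<i}. X j = vj))"
  proof
    assume AK: "A < K"
    show "\<forall>i\<in>{1..n}. X i = vk \<longrightarrow> (\<exists>j\<in>{1..<i}. X j = vj)"
    proof (intro ballI impI, rule ccontr)
      fix i assume i: "i \<in> {1..n}" "X i = vk" "\<not> (\<exists>j\<in>{1..<i}. X j = vj)"
      have "K \<le> i" using lK i by auto
      moreover have "A > i"
      proof (rule ccontr)
        assume "\<not> i < A"
        then have "A \<le> i" by simp
        moreover have "A \<noteq> i" using pA i assms by auto
        ultimately have "A < i" by simp
        then show False using pA i by auto
      qed
      ultimately show False using AK by simp
    qed
  next
    assume c: "\<forall>i\<in>{1..n}. X i = vk \<longrightarrow> (\<exists>j\<in>{1..<i}. X j = vj)"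
    show "A < K"
    proof (cases "K = n + 2")
      case True
      have "A \<le> n + 1" using lA by simp
      then show ?thesis using True by simp
    next
      case False
      then have K: "1 \<le> K \<and> K \<le> n \<and> X K = vk" using pK by simp
      then obtain j where j: "j \<in> {1..<K}" "X j = vj" using c by auto
      then have "A \<le> j" using lA K by auto
      then show ?thesis using j by simp
    qed
  qed
  then show ?thesis unfolding precedence_def A_def K_def .
qed

lemma B_iff:
  "(\<exists>B :: nat \<Rightarrow> nat. (\<forall>i\<in>{1..n+1}. B i \<in> {0, 1}) \<and> B 1 = 0 \<and>
                 (\<forall>i\<in>{1..n}. Cprec vj vk (X i) (B i) (B (i + 1))))
   \<longleftrightarrow> (\<forall>i\<in>{1..n}. X i = vk \<longrightarrow> (\<exists>j\<in>{1..<i}. X j = vj))"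
proof
  assume "\<exists>B :: nat \<Rightarrow> nat. (\<forall>i\<in>{1..n+1}. B i \<in> {0, 1}) \<and> B 1 = 0 \<and>
                 (\<forall>i\<in>{1..n}. Cprec vj vk (X i) (B i) (B (i + 1)))"
  then obtain B :: "nat \<Rightarrow> nat" where B1: "B 1 = 0" and C: "\<forall>i\<in>{1..n}. Cprec vj vk (X i) (B i) (B (i + 1))"
    by blast
  have key: "1 \<le> i \<Longrightarrow> i \<le> n + 1 \<Longrightarrow> B i \<noteq> 0 \<longrightarrow> (\<exists>j\<in>{1..<i}. X j = vj)" for i
  proof (induction i)
    case 0 then show ?case by simp
  next
    case (Suc m)
    show ?case
    proof (cases "m = 0")
      case True then show ?thesis using B1 by simp
    next
      case False
      then have m: "m \<in> {1..n}" using Suc.prems by auto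
      have c: "Cprec vj vk (X m) (B m) (B (m + 1))" using C m by blast
      have IH: "B m \<noteq> 0 \<longrightarrow> (\<exists>j\<in>{1..<m}. X j = vj)" using Suc.IH m by auto
      show ?thesis
      proof (cases "X m = vj")
        case True then show ?thesis using m by auto
      next
        case False
        then have "B (Suc m) = B m" using c unfolding Cprec_def by simp
        then show ?thesis using IH by auto
      qed
    qed
  qed
  show "\<forall>i\<in>{1..n}. X i = vk \<longrightarrow> (\<exists>j\<in>{1..<i}. X j = vj)"
  proof (intro ballI impI)
    fix i assume i: "i \<in> {1..n}" "X i = vk"
    have "Cprec vj vk (X i) (B i) (B (i + 1))" using C i by auto
    then have "B i \<noteq> 0" using i unfolding Cprec_def by auto
    then show "\<exists>j\<in>{1..<i}. X j = vj" using key i by auto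
  qed
next
  assume c: "\<forall>i\<in>{1..n}. X i = vk \<longrightarrow> (\<exists>j\<in>{1..<i}. X j = vj)"
  define B where "B i = (if \<exists>j\<in>{1..<i}. X j = vj then 1 else 0::nat)" for i
  have "\<forall>i\<in>{1..n}. Cprec vj vk (X i) (B i) (B (i + 1))"
  proof
    fix i assume i: "i \<in> {1..n}"
    have e: "(\<exists>j\<in>{1..<i+1}. X j = vj) \<longleftrightarrow> (\<exists>j\<in>{1..<i}. X j = vj) \<or> X i = vj"
      using i less_Suc_eq by auto
    show "Cprec vj vk (X i) (B i) (B (i + 1))"
      unfolding Cprec_def B_def using e c i by auto
  qed
  then show "\<exists>B :: nat \<Rightarrow> nat. (\<forall>i\<in>{1..n+1}. B i \<in> {0, 1}) \<and> B 1 = 0 \<and>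
                 (\<forall>i\<in>{1..n}. Cprec vj vk (X i) (B i) (B (i + 1)))"
    by (intro exI[of _ B]) (auto simp: B_def)
qed

lemma ext_back:
  fixes k n :: nat
  assumes g: "\<forall>i\<in>{1..n}. gac3 C (D i) (DB i) (DB (i + 1))"
  shows "1 \<le> k \<Longrightarrow> k \<le> n + 1 \<Longrightarrow> b \<in> DB k \<Longrightarrow>
     \<exists>X B. B k = b \<and> (\<forall>j\<in>{1..k}. B j \<in> DB j) \<and> (\<forall>j\<in>{1..<k}. X j \<in> D j \<and> C (X j) (B j) (B (j+1)))"
proof (induction k arbitrary: b)
  case 0 then show ?case by simp
next
  case (Suc m)
  show ?case
  proof (cases "m = 0")
    case True
    then show ?thesis using Suc.prems by (intro exI[of _ undefined] exI[of _ "\<lambda>_. b"]) auto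
  next
    case False
    have mn: "m \<in> {1..n}" using Suc.prems False by auto
    from g mn Suc.prems obtain x y where xy: "x \<in> D m" "y \<in> DB m" "C x y b"
      unfolding gac3_def by (metis Suc_eq_plus1)
    from Suc.IH[OF _ _ xy(2)] mn obtain X B where XB: "B m = y" "\<forall>j\<in>{1..m}. B j \<in> DB j"
      "\<forall>j\<in>{1..<m}. X j \<in> D j \<and> C (X j) (B j) (B (j+1))" by auto
    have r: "j \<in> {1..<Suc m} \<Longrightarrow> j = m \<or> j \<in> {1..<m}" for j by auto
    have r2: "j \<in> {1..Suc m} \<Longrightarrow> j = Suc m \<or> j \<in> {1..m}" for j by auto
    have A1: "\<forall>j\<in>{1..Suc m}. (B(Suc m := b)) j \<in> DB j"
    proof
      fix j assume "j \<in> {1..Suc m}"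
      then consider "j = Suc m" | "j \<in> {1..m}" using r2 by blast
      then show "(B(Suc m := b)) j \<in> DB j" using XB Suc.prems by cases auto
    qed
    have A2: "\<forall>j\<in>{1..<Suc m}. (X(m := x)) j \<in> D j \<and> C ((X(m := x)) j) ((B(Suc m := b)) j) ((B(Suc m := b)) (j+1))"
    proof
      fix j assume "j \<in> {1..<Suc m}"
      then consider "j = m" | "j \<in> {1..<m}" using r by blast
      then show "(X(m := x)) j \<in> D j \<and> C ((X(m := x)) j) ((B(Suc m := b)) j) ((B(Suc m := b)) (j+1))"
      proof cases
        case 1 then show ?thesis using xy XB by simp
      next
        case 2 then show ?thesis using XB by auto
      qed
    qed
    show ?thesis using A1 A2 by (intro exI[of _ "X(m := x)"] exI[of _ "B(Suc m := b)"]) simp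
  qed
qed

lemma ext_fwd:
  fixes k n m :: nat
  assumes g: "\<forall>i\<in>{1..n}. gac3 C (D i) (DB i) (DB (i + 1))"
  shows "1 \<le> k \<Longrightarrow> k + m = n + 1 \<Longrightarrow> b \<in> DB k \<Longrightarrow>
     \<exists>X B. B k = b \<and> (\<forall>j\<in>{k..n+1}. B j \<in> DB j) \<and> (\<forall>j\<in>{k..n}. X j \<in> D j \<and> C (X j) (B j) (B (j+1)))"
proof (induction m arbitrary: k b)
  case 0 then show ?case by (intro exI[of _ undefined] exI[of _ "\<lambda>_. b"]) auto
next
  case (Suc m)
  have kn: "k \<in> {1..n}" using Suc.prems by auto
  from g kn Suc.prems(3) obtain x z where xz: "x \<in> D k" "z \<in> DB (k+1)" "C x b z"
    unfolding gac3_def by blast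
  from Suc.IH[of "k+1" z] xz Suc.prems obtain X B where XB: "B (k+1) = z" "\<forall>j\<in>{k+1..n+1}. B j \<in> DB j"
    "\<forall>j\<in>{k+1..n}. X j \<in> D j \<and> C (X j) (B j) (B (j+1))" by auto
  have r: "j \<in> {k..n} \<Longrightarrow> j = k \<or> j \<in> {k+1..n}" for j by auto
  have r2: "j \<in> {k..n+1} \<Longrightarrow> j = k \<or> j \<in> {k+1..n+1}" for j by auto
  have A1: "\<forall>j\<in>{k..n+1}. (B(k := b)) j \<in> DB j"
  proof
    fix j assume "j \<in> {k..n+1}"
    then consider "j = k" | "j \<in> {k+1..n+1}" using r2 by blast
    then show "(B(k := b)) j \<in> DB j" using XB Suc.prems by cases auto
  qed
  have A2: "\<forall>j\<in>{k..n}. (X(k := x)) j \<in> D j \<and> C ((X(k := x)) j) ((B(k := b)) j) ((B(k := b)) (j+1))"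
  proof
    fix j assume "j \<in> {k..n}"
    then consider "j = k" | "j \<in> {k+1..n}" using r by blast
    then show "(X(k := x)) j \<in> D j \<and> C ((X(k := x)) j) ((B(k := b)) j) ((B(k := b)) (j+1))"
    proof cases
      case 1 then show ?thesis using xz XB by simp
    next
      case 2 then show ?thesis using XB by auto
    qed
  qed
  show ?case using A1 A2 by (intro exI[of _ "X(k := x)"] exI[of _ "B(k := b)"]) simp
qed

theorem mainTheorem7:
  fixes vj vk :: 'a and n :: nat
  assumes "vj \<noteq> vk"
  shows "(\<forall>X :: nat \<Rightarrow> 'a.
            precedence vj vk n X \<longleftrightarrow>
            (\<exists>B :: nat \<Rightarrow> nat. (\<forall>i\<in>{1..n+1}. B i \<in> {0, 1}) \<and> B 1 = 0 \<and>
                 (\<forall>i\<in>{1..n}. Cprec vj vk (X i) (B i) (B (i + 1)))))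
       \<and> (\<forall>(D :: nat \<Rightarrow> 'a set) (DB :: nat \<Rightarrow> nat set).
            (\<forall>i\<in>{1..n}. finite (D i) \<and> D i \<noteq> {}) \<and>
            (\<forall>i\<in>{1..n+1}. DB i \<subseteq> {0, 1} \<and> DB i \<noteq> {}) \<and>
            DB 1 = {0} \<and>
            (\<forall>i\<in>{1..n}. gac3 (Cprec vj vk) (D i) (DB i) (DB (i + 1)))
            \<longrightarrow> gacn n D (precedence vj vk n))"
proof (intro conjI allI impI)
  fix X :: "nat \<Rightarrow> 'a"
  show "precedence vj vk n X \<longleftrightarrow>
            (\<exists>B :: nat \<Rightarrow> nat. (\<forall>i\<in>{1..n+1}. B i \<in> {0, 1}) \<and> B 1 = 0 \<and>
                 (\<forall>i\<in>{1..n}. Cprec vj vk (X i) (B i) (B (i + 1))))"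
    unfolding prec_iff[OF assms] B_iff ..
next
  fix D :: "nat \<Rightarrow> 'a set" and DB :: "nat \<Rightarrow> nat set"
  assume h: "(\<forall>i\<in>{1..n}. finite (D i) \<and> D i \<noteq> {}) \<and>
            (\<forall>i\<in>{1..n+1}. DB i \<subseteq> {0, 1} \<and> DB i \<noteq> {}) \<and>
            DB 1 = {0} \<and>
            (\<forall>i\<in>{1..n}. gac3 (Cprec vj vk) (D i) (DB i) (DB (i + 1)))"
  then have g: "\<forall>i\<in>{1..n}. gac3 (Cprec vj vk) (D i) (DB i) (DB (i + 1))" by blast
  show "gacn n D (precedence vj vk n)"
    unfolding gacn_def
  proof (intro ballI)
    fix i d assume i: "i \<in> {1..n}" and d: "d \<in> D i"
    from g i d obtain b b' where bb: "b \<in> DB i" "b' \<in> DB (i+1)" "Cprec vj vk d b b'"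
      unfolding gac3_def by blast
    from ext_back[OF g, of i b] i bb obtain X1 B1 where X1: "B1 i = b" "\<forall>j\<in>{1..i}. B1 j \<in> DB j"
      "\<forall>j\<in>{1..<i}. X1 j \<in> D j \<and> Cprec vj vk (X1 j) (B1 j) (B1 (j+1))" by auto
    from ext_fwd[OF g, of "i+1" "n - i" b'] i bb obtain X2 B2 where X2: "B2 (i+1) = b'"
      "\<forall>j\<in>{i+1..n+1}. B2 j \<in> DB j" "\<forall>j\<in>{i+1..n}. X2 j \<in> D j \<and> Cprec vj vk (X2 j) (B2 j) (B2 (j+1))"
      by auto
    define X where "X j = (if j < i then X1 j else if j = i then d else X2 j)" for j
    define B where "B j = (if j \<le> i then B1 j else B2 j)" for j
    have XD: "\<forall>k\<in>{1..n}. X k \<in> D k"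
      using X1 X2 d i unfolding X_def by (auto simp: not_less)
    have BD: "\<forall>j\<in>{1..n+1}. B j \<in> DB j"
      using X1 X2 i unfolding B_def by (auto simp: not_le)
    have Bv: "\<forall>j\<in>{1..n+1}. B j \<in> {0,1}" using BD h by blast
    have B1v: "B 1 = 0" using BD h i by auto
    have CC: "\<forall>j\<in>{1..n}. Cprec vj vk (X j) (B j) (B (j + 1))"
    proof
      fix j assume j: "j \<in> {1..n}"
      consider "j < i" | "j = i" | "j > i" by linarith
      then show "Cprec vj vk (X j) (B j) (B (j + 1))"
      proof cases
        case 1 then show ?thesis using X1 j unfolding X_def B_def by auto
      next
        case 2 then show ?thesis using X1 X2 bb unfolding X_def B_def by auto
      next
        case 3 then show ?thesis using X2 j unfolding X_def B_def by auto
      qed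
    qed
    have "\<exists>B :: nat \<Rightarrow> nat. (\<forall>i\<in>{1..n+1}. B i \<in> {0, 1}) \<and> B 1 = 0 \<and>
                 (\<forall>i\<in>{1..n}. Cprec vj vk (X i) (B i) (B (i + 1)))"
      using Bv B1v CC by blast
    then have "precedence vj vk n X"
      unfolding prec_iff[OF assms] B_iff .
    then show "\<exists>X. (\<forall>k\<in>{1..n}. X k \<in> D k) \<and> X i = d \<and> precedence vj vk n X"
      using XD by (intro exI[of _ X]) (auto simp: X_def)
  qed
qed

end
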